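(* Let $K$ be a non-archimedean local field and let $\{g_n\}$ be a sequence in $\mathrm{SL}_2(K)$ such that each cyclic group $\langle g_n\rangle$ is discrete. If $g_n$ converges to an elliptic element $g\in\mathrm{SL}_2(K)$, then the sequence $\{\mathrm{tr}(g_n)\}$ is eventually constant.
   Context: $\mathrm{SL}_2(K)$ has the subspace topology from $K^4$ and acts by isometries on its Bruhat–Tits tree $T_K$; an element is elliptic if it fixes a vertex of $T_K$. *)

theory Defs
  imports Complex_Main
begin

text \<open>Non-archimedean local field: a field K with an absolute value absv which is
  ultrametric, discretely valued and nontrivial, complete, with finite residue field.\<close>

definition nonarch_local_field :: "('a::field \<Rightarrow> real) \<Rightarrow> bool" where
  "nonarch_local_field absv \<longleftrightarrow>
     (\<forall>x. 0 \<le> absv x) \<and> (\<forall>x. absv x = 0 \<longleftrightarrow> x = 0) \<and>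
     (\<forall>x y. absv (x * y) = absv x * absv y) \<and>
     (\<forall>x y. absv (x + y) \<le> max (absv x) (absv y)) \<and>
     (\<exists>\<pi>. 0 < absv \<pi> \<and> absv \<pi> < 1 \<and>
          (\<forall>x. x \<noteq> 0 \<longrightarrow> (\<exists>k::int. absv x = absv \<pi> powi k))) \<and>
     (\<forall>s::nat \<Rightarrow> 'a. (\<forall>e>0. \<exists>N. \<forall>m\<ge>N. \<forall>n\<ge>N. absv (s m - s n) < e) \<longrightarrow>
          (\<exists>l. \<forall>e>0. \<exists>N. \<forall>n\<ge>N. absv (s n - l) < e)) \<and>
     finite ((\<lambda>x. {y. absv y \<le> 1 \<and> absv (y - x) < 1}) ` {x. absv x \<le> 1})"

text \<open>2x2 matrices (a,b,c,d) = [[a,b],[c,d]], viewed as points of K^4.\<close>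
type_synonym 'a mat2 = "'a \<times> 'a \<times> 'a \<times> 'a"

fun mmul :: "'a::field mat2 \<Rightarrow> 'a mat2 \<Rightarrow> 'a mat2" where
  "mmul (a,b,c,d) (a',b',c',d') = (a*a'+b*c', a*b'+b*d', c*a'+d*c', c*b'+d*d')"

definition mone :: "'a::field mat2" where "mone = (1,0,0,1)"

fun mdet :: "'a::field mat2 \<Rightarrow> 'a" where "mdet (a,b,c,d) = a*d - b*c"

fun mtr :: "'a::field mat2 \<Rightarrow> 'a" where "mtr (a,b,c,d) = a + d"

text \<open>Inverse of a determinant-one matrix.\<close>
fun minv :: "'a::field mat2 \<Rightarrow> 'a mat2" where "minv (a,b,c,d) = (d,-b,-c,a)"

definition SL2 :: "'a::field mat2 set" where "SL2 = {g. mdet g = 1}"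

primrec mpow_nat :: "'a::field mat2 \<Rightarrow> nat \<Rightarrow> 'a mat2" where
  "mpow_nat g 0 = mone"
| "mpow_nat g (Suc n) = mmul g (mpow_nat g n)"

definition mpow :: "'a::field mat2 \<Rightarrow> int \<Rightarrow> 'a mat2" where
  "mpow g k = (if 0 \<le> k then mpow_nat g (nat k) else mpow_nat (minv g) (nat (- k)))"

definition cyclic_group :: "'a::field mat2 \<Rightarrow> 'a mat2 set" where
  "cyclic_group g = range (mpow g)"

text \<open>Max-norm distance on K^4 (induces the product topology).\<close>
fun mdist :: "('a::field \<Rightarrow> real) \<Rightarrow> 'a mat2 \<Rightarrow> 'a mat2 \<Rightarrow> real" where
  "mdist absv (a,b,c,d) (a',b',c',d') =
     max (max (absv (a-a')) (absv (b-b'))) (max (absv (c-c')) (absv (d-d')))"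

definition discrete_set :: "('a::field \<Rightarrow> real) \<Rightarrow> 'a mat2 set \<Rightarrow> bool" where
  "discrete_set absv S \<longleftrightarrow> (\<forall>h\<in>S. \<exists>e>0. \<forall>h'\<in>S. mdist absv h h' < e \<longrightarrow> h' = h)"

definition mat_converges :: "('a::field \<Rightarrow> real) \<Rightarrow> (nat \<Rightarrow> 'a mat2) \<Rightarrow> 'a mat2 \<Rightarrow> bool" where
  "mat_converges absv s g \<longleftrightarrow> (\<forall>e>0. \<exists>N. \<forall>n\<ge>N. mdist absv (s n) g < e)"

text \<open>Bruhat--Tits tree: vertices are homothety classes of O-lattices in K^2,
  where O = {x. absv x \<le> 1}. A lattice is the O-span of a K-basis of K^2.\<close>
definition is_lattice :: "('a::field \<Rightarrow> real) \<Rightarrow> ('a \<times> 'a) set \<Rightarrow> bool" where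
  "is_lattice absv L \<longleftrightarrow> (\<exists>p q r s. p * s - q * r \<noteq> 0 \<and>
      L = {(x * p + y * r, x * q + y * s) | x y. absv x \<le> 1 \<and> absv y \<le> 1})"

fun mapply :: "'a::field mat2 \<Rightarrow> 'a \<times> 'a \<Rightarrow> 'a \<times> 'a" where
  "mapply (a,b,c,d) (x,y) = (a*x + b*y, c*x + d*y)"

text \<open>g is elliptic iff it fixes a vertex [L] of the tree: gL is homothetic to L.\<close>
definition elliptic :: "('a::field \<Rightarrow> real) \<Rightarrow> 'a mat2 \<Rightarrow> bool" where
  "elliptic absv g \<longleftrightarrow> (\<exists>L. is_lattice absv L \<and>
      (\<exists>c. c \<noteq> 0 \<and> mapply g ` L = (\<lambda>(x,y). (c*x, c*y)) ` L))"

end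

theory Submission
  imports Defs "HOL-Computational_Algebra.Polynomial" "HOL-Computational_Algebra.Primes"
begin


lemma mmul_assoc: "mmul (mmul x y) z = mmul x (mmul y (z::'a::field mat2))"
  by (cases x; cases y; cases z) (simp add: algebra_simps)

lemma mmul_mone_left[simp]: "mmul mone x = (x::'a::field mat2)"
  by (cases x) (simp add: mone_def)
lemma mmul_mone_right[simp]: "mmul x mone = (x::'a::field mat2)"
  by (cases x) (simp add: mone_def)

lemma mdet_mmul: "mdet (mmul x y) = mdet x * mdet (y::'a::field mat2)"
  by (cases x; cases y) (simp add: algebra_simps)

lemma minv_left: "mdet h = 1 \<Longrightarrow> mmul (minv h) h = (mone::'a::field mat2)"
  by (cases h) (auto simp: mone_def algebra_simps)
lemma minv_right: "mdet h = 1 \<Longrightarrow> mmul h (minv h) = (mone::'a::field mat2)"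
  by (cases h) (auto simp: mone_def algebra_simps)
lemma mdet_minv: "mdet (minv h) = mdet (h::'a::field mat2)"
  by (cases h) (auto simp: algebra_simps)
lemma mtr_minv: "mtr (minv h) = mtr (h::'a::field mat2)"
  by (cases h) (auto simp: algebra_simps)
lemma mdet_mone[simp]: "mdet (mone::'a::field mat2) = 1" by (simp add: mone_def)

lemma mpow_nat_add: "mpow_nat v (i + j) = mmul (mpow_nat v i) (mpow_nat (v::'a::field mat2) j)"
  by (induction i) (auto simp: mmul_assoc)

lemma mpow_nat_Suc_right: "mpow_nat v (Suc i) = mmul (mpow_nat v i) (v::'a::field mat2)"
  using mpow_nat_add[of v i 1] by simp

lemma mpow_nat_mult: "mpow_nat (mpow_nat v i) j = mpow_nat (v::'a::field mat2) (i * j)"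
  by (induction j) (auto simp: mpow_nat_add mult.commute)

lemma mdet_mpow: "mdet v = 1 \<Longrightarrow> mdet (mpow_nat (v::'a::field mat2) n) = 1"
  by (induction n) (auto simp: mdet_mmul)

lemma minv_pow_cancel: "mdet h = 1 \<Longrightarrow> mmul (mpow_nat (minv h) i) (mpow_nat h i) = (mone::'a::field mat2)"
proof (induction i)
  case (Suc i)
  have "mmul (mpow_nat (minv h) (Suc i)) (mpow_nat h (Suc i))
      = mmul (mpow_nat (minv h) i) (mmul (mmul (minv h) h) (mpow_nat h i))"
  proof -
    have e: "mpow_nat (minv h) (Suc i) = mmul (mpow_nat (minv h) i) (minv h)" by (rule mpow_nat_Suc_right)
    show ?thesis by (simp only: e mpow_nat.simps(2)[of h i] mmul_assoc)
  qed
  also have "\<dots> = mone" using Suc by (simp add: minv_left)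
  finally show ?case .
qed (simp)

fun lin :: "'a::field \<Rightarrow> 'a \<Rightarrow> 'a mat2 \<Rightarrow> 'a mat2" where
  "lin \<alpha> \<beta> (a,b,c,d) = (\<alpha>*a+\<beta>, \<alpha>*b, \<alpha>*c, \<alpha>*d+\<beta>)"

primrec cf :: "'a::field \<Rightarrow> nat \<Rightarrow> 'a \<times> 'a" where
  "cf s 0 = (0,1)"
| "cf s (Suc n) = (fst (cf s n) * s + snd (cf s n), - fst (cf s n))"

lemma mmul_lin: "mdet v = 1 \<Longrightarrow> mmul v (lin \<alpha> \<beta> v) = lin (\<alpha> * mtr v + \<beta>) (-\<alpha>) (v::'a::field mat2)"
proof -
  assume d: "mdet v = 1"
  obtain a b c d where v: "v = (a,b,c,d)" by (cases v)
  have e: "a*d = 1 + b*c" using d by (simp add: v algebra_simps)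
  have e2: "\<alpha> * (a*d) = \<alpha> + \<alpha>*(b*c)" by (simp add: e algebra_simps)
  show ?thesis using e2 by (simp add: v algebra_simps)
qed

lemma mpow_lin: "mdet v = 1 \<Longrightarrow>
   mpow_nat v n = lin (fst (cf (mtr v) n)) (snd (cf (mtr v) n)) (v::'a::field mat2)"
  by (induction n) (auto simp: mmul_lin mone_def intro: prod_eqI  split: prod.splits, cases v, auto)

lemma mtr_lin: "mtr (lin \<alpha> \<beta> v) = \<alpha> * mtr v + 2 * (\<beta>::'a::field)"
  by (cases v) (simp add: algebra_simps)

lemma lin_mone_nonscalar:
  assumes "lin \<alpha> \<beta> w = mone" "w \<noteq> mone" "mdet w = 1" "w \<noteq> (-1,0,0,-1)"
  shows "\<alpha> = (0::'a::field)"
proof (rule ccontr)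
  assume a: "\<alpha> \<noteq> 0"
  obtain a b c d where w: "w = (a,b,c,d)" by (cases w)
  from assms(1) a have "b = 0" "c = 0" "\<alpha>*a+\<beta> = 1" "\<alpha>*d+\<beta> = 1" by (auto simp: w mone_def)
  then have "a = d" using a by (metis add_right_cancel mult_left_cancel)
  with assms(3) \<open>b=0\<close> have "a*a = 1" by (simp add: w)
  then have "a = 1 \<or> a = -1" by (metis square_eq_1_iff power2_eq_square)
  then show False using assms(2,4) \<open>a=d\<close> \<open>b=0\<close> \<open>c=0\<close> by (auto simp: w mone_def)
qed



locale nalf = fixes A :: "'a::field \<Rightarrow> real" assumes nlf: "nonarch_local_field A"
begin

lemma nonneg[simp]: "0 \<le> A x" using nlf by (simp add: nonarch_local_field_def)
lemma zero_iff[simp]: "A x = 0 \<longleftrightarrow> x = 0" using nlf by (simp add: nonarch_local_field_def)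
lemma mult[simp]: "A (x * y) = A x * A y" using nlf by (simp add: nonarch_local_field_def)
lemma ultra: "A (x + y) \<le> max (A x) (A y)" using nlf by (simp add: nonarch_local_field_def)

lemma zero[simp]: "A 0 = 0" by simp

lemma one[simp]: "A 1 = 1"
proof -
  have "A 1 = A 1 * A 1" using mult[of 1 1] by simp
  moreover have "A 1 \<noteq> 0" by simp
  ultimately show ?thesis by (metis mult_cancel_left1)
qed

lemma minus[simp]: "A (- x) = A x"
proof -
  have "A (-1) * A (-1) = 1" using mult[of "-1" "-1"] by simp
  then have "A (-1) = 1" using nonneg[of "-1"]
    using power2_eq_1_iff[of "A (-1)"] nonneg[of "-1"] by (auto simp: power2_eq_square)
  then show ?thesis using mult[of "-1" x] by simp
qed

lemma diff_commute: "A (x - y) = A (y - x)"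
  using minus[of "x - y"] by simp

lemma power[simp]: "A (x ^ n) = A x ^ n" by (induction n) auto

lemma inverse[simp]: "A (inverse x) = inverse (A x)"
proof (cases "x = 0")
  case False
  then have "A x * A (inverse x) = 1" using mult[of x "inverse x"] by simp
  moreover have "A x \<noteq> 0" using False by simp
  ultimately show ?thesis by (simp add: inverse_eq_divide eq_divide_eq mult.commute)
qed simp

lemma divide[simp]: "A (x / y) = A x / A y"
  by (simp add: divide_inverse)

lemma ultra_diff: "A (x - y) \<le> max (A x) (A y)"
  using ultra[of x "-y"] by simp

lemma ultra_trans: "A (x - z) \<le> max (A (x - y)) (A (y - z))"
  using ultra[of "x - y" "y - z"] by simp

lemma ultra_lt: "A x < e \<Longrightarrow> A y < e \<Longrightarrow> A (x + y) < e"
  using ultra[of x y] by simp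
lemma ultra_le: "A x \<le> e \<Longrightarrow> A y \<le> e \<Longrightarrow> A (x + y) \<le> e"
  using ultra[of x y] by simp
lemma ultra_diff_lt: "A x < e \<Longrightarrow> A y < e \<Longrightarrow> A (x - y) < e"
  using ultra_diff[of x y] by simp
lemma ultra_diff_le: "A x \<le> e \<Longrightarrow> A y \<le> e \<Longrightarrow> A (x - y) \<le> e"
  using ultra_diff[of x y] by simp

lemma of_nat_le1: "A (of_nat n) \<le> 1"
  by (induction n) (auto intro!: ultra_le simp: add.commute)

lemma of_int_le1: "A (of_int k) \<le> 1"
  by (cases k rule: int_cases) (auto simp: of_nat_le1 simp del: of_nat_Suc)

lemma iso: "A (a - b) < A b \<Longrightarrow> A a = A b"
proof -
  assume h: "A (a - b) < A b"
  have "A a \<le> max (A (a - b)) (A b)" using ultra[of "a - b" b] by simp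
  moreover have "A b \<le> max (A (b - a)) (A a)" using ultra[of "b - a" a] by simp
  ultimately show ?thesis using h diff_commute[of a b] by auto
qed

lemma two_le1: "A 2 \<le> 1" using of_nat_le1[of 2] by simp

lemma discrete: "\<exists>p. 0 < A p \<and> A p < 1 \<and> (\<forall>w. A w < 1 \<longrightarrow> A w \<le> A p)"
proof -
  obtain p where p: "0 < A p" "A p < 1" "\<And>x. x \<noteq> 0 \<Longrightarrow> \<exists>k::int. A x = A p powi k"
    using nlf unfolding nonarch_local_field_def by blast
  have "A w \<le> A p" if "A w < 1" for w
  proof (cases "w = 0")
    case False
    then obtain k where k: "A w = A p powi k" using p by blast
    show ?thesis
    proof (cases "k \<ge> 1")
      case True
      define n where "n = nat k"
      have n: "k = int n" "n \<ge> 1" using True by (auto simp: n_def)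
      then have "A p ^ n \<le> A p ^ 1" using p by (intro power_decreasing) auto
      then show ?thesis using k n by (simp add: power_int_of_nat)
    next
      case False
      define n where "n = nat (-k)"
      have n: "k = - int n" using False by (auto simp: n_def)
      have "A p ^ n \<le> 1" using p by (intro power_le_one) auto
      then have "1 \<le> A p powi k" using p n by (simp add: power_int_minus field_simps)
      then show ?thesis using k that by simp
    qed
  qed (use p in simp)
  then show ?thesis using p by blast
qed

end


context nalf begin

definition pi where "pi = (SOME p. 0 < A p \<and> A p < 1 \<and> (\<forall>w. A w < 1 \<longrightarrow> A w \<le> A p))"

lemma pi: "0 < A pi" "A pi < 1" "\<And>w. A w < 1 \<Longrightarrow> A w \<le> A pi"
  using someI_ex[OF discrete] unfolding pi_def[symmetric] by auto

lemma pi_ne0: "pi \<noteq> 0" using pi(1) by auto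

lemma cover_unit: "\<exists>X. finite X \<and> (\<forall>z. A z \<le> 1 \<longrightarrow> (\<exists>x\<in>X. A (z - x) < 1))"
proof -
  define C where "C = (\<lambda>x. {y. A y \<le> 1 \<and> A (y - x) < 1})"
  have fin: "finite (C ` {x. A x \<le> 1})"
    using nlf unfolding nonarch_local_field_def C_def by blast
  define X where "X = (\<lambda>c. SOME x. A x \<le> 1 \<and> C x = c) ` (C ` {x. A x \<le> 1})"
  have "\<exists>x\<in>X. A (z - x) < 1" if z: "A z \<le> 1" for z
  proof -
    have ex: "\<exists>x. A x \<le> 1 \<and> C x = C z" using z by blast
    define x where "x = (SOME x. A x \<le> 1 \<and> C x = C z)"
    have x: "A x \<le> 1" "C x = C z" using someI_ex[OF ex] unfolding x_def by auto
    have "x \<in> X" unfolding X_def x_def using z by blast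
    moreover have "z \<in> C z" using z by (simp add: C_def)
    ultimately show ?thesis using x(2) by (auto simp: C_def)
  qed
  then show ?thesis using fin X_def by blast
qed

lemma cover_r: "\<exists>F. finite F \<and> (\<forall>y. A y \<le> 1 \<longrightarrow> (\<exists>f\<in>F. A (y - f) \<le> A pi ^ r))"
proof (induction r)
  case 0
  then show ?case by (rule exI[of _ "{0}"]) auto
next
  case (Suc r)
  then obtain F where F: "finite F" "\<And>y. A y \<le> 1 \<Longrightarrow> \<exists>f\<in>F. A (y - f) \<le> A pi ^ r" by blast
  obtain X where X: "finite X" "\<And>z. A z \<le> 1 \<Longrightarrow> \<exists>x\<in>X. A (z - x) < 1" using cover_unit by blast
  define F' where "F' = (\<lambda>(f,x). f + pi^r * x) ` (F \<times> X)"
  have "\<exists>f\<in>F'. A (y - f) \<le> A pi ^ Suc r" if y: "A y \<le> 1" for y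
  proof -
    obtain f where f: "f \<in> F" "A (y - f) \<le> A pi ^ r" using F(2) y by blast
    define w where "w = (y - f) / pi^r"
    have pr: "A pi ^ r > 0" using pi by simp
    have "A w \<le> 1" using f pr by (simp add: w_def)
    then obtain x where x: "x \<in> X" "A (w - x) < 1" using X by blast
    have "A (w - x) \<le> A pi" using pi(3) x by blast
    have eq: "y - (f + pi^r * x) = pi^r * (w - x)" using pi_ne0 by (simp add: w_def field_simps)
    have "A (y - (f + pi^r * x)) = A pi ^ r * A (w - x)" by (simp add: eq)
    also have "\<dots> \<le> A pi ^ r * A pi" using \<open>A (w - x) \<le> A pi\<close> pr by simp
    finally have "A (y - (f + pi^r * x)) \<le> A pi ^ Suc r" by (simp add: mult.commute)
    moreover have "f + pi^r * x \<in> F'" using f x by (auto simp: F'_def)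
    ultimately show ?thesis by blast
  qed
  then show ?case using F X by (intro exI[of _ F']) (auto simp: F'_def)
qed

lemma cover: assumes "\<epsilon> > 0" shows "\<exists>F. finite F \<and> (\<forall>y. A y \<le> R \<longrightarrow> (\<exists>f\<in>F. A (y - f) < \<epsilon>))"
proof -
  have "0 < 1 / max R 1" by simp
  then obtain j where j: "A pi ^ j < 1 / max R 1" using real_arch_pow_inv[of "1 / max R 1" "A pi"] pi by blast
  obtain t where t: "A pi ^ t < \<epsilon>" using real_arch_pow_inv[of \<epsilon> "A pi"] pi assms by auto
  obtain F where F: "finite F" "\<And>y. A y \<le> 1 \<Longrightarrow> \<exists>f\<in>F. A (y - f) \<le> A pi ^ (j + t)" using cover_r by blast
  have pj: "A pi ^ j > 0" using pi by simp
  have "\<exists>f\<in>(\<lambda>f. f / pi^j) ` F. A (y - f) < \<epsilon>" if y: "A y \<le> R" for y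
  proof -
    have "A (pi^j * y) = A pi ^ j * A y" by simp
    also have "\<dots> \<le> A pi ^ j * max R 1" using y pj by (intro mult_left_mono) auto
    also have "\<dots> \<le> 1" using j by (simp add: field_simps)
    finally obtain f where f: "f \<in> F" "A (pi^j * y - f) \<le> A pi ^ (j + t)" using F by blast
    have eq: "y - f / pi^j = (pi^j * y - f) / pi^j" using pi_ne0 by (simp add: field_simps)
    have "A (y - f / pi^j) = A (pi^j * y - f) / A pi ^ j" by (simp add: eq)
    also have "\<dots> \<le> A pi ^ (j + t) / A pi ^ j" using f pj by (intro divide_right_mono) auto
    also have "\<dots> = A pi ^ t" using pj pi_ne0 by (simp add: power_add)
    finally show ?thesis using t f by force
  qed
  then show ?thesis using F by blast
qed

end


lemma pigeon:
  assumes "finite B" "\<And>k. k \<le> card B \<Longrightarrow> g k \<in> B"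
  shows "\<exists>i j. i < j \<and> j \<le> card B \<and> g i = g j"
proof -
  have "\<not> inj_on g {0..card B}"
  proof
    assume "inj_on g {0..card B}"
    moreover have "g ` {0..card B} \<subseteq> B" using assms(2) by auto
    ultimately have "card {0..card B} \<le> card B" using card_inj_on_le assms(1) by blast
    then show False by simp
  qed
  then obtain i j where "i \<le> card B" "j \<le> card B" "i \<noteq> j" "g i = g j"
    unfolding inj_on_def by auto
  then show ?thesis
  proof (cases "i < j")
    case False
    then have "j < i" using \<open>i \<noteq> j\<close> by simp
    then show ?thesis using \<open>i \<le> card B\<close> \<open>g i = g j\<close> by metis
  qed blast
qed

context nalf begin

fun mbnd :: "'a mat2 \<Rightarrow> real" where
  "mbnd (a,b,c,d) = max (max (A a) (A b)) (max (A c) (A d))"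

lemma mbnd_minv: "mbnd (minv h) = mbnd h"
  by (cases h) (auto simp: max.commute max.left_commute)

lemma mdist_sym: "mdist A x y = mdist A y x"
  by (cases x; cases y) (simp add: diff_commute)

lemma cf_bound: "A s \<le> 1 \<Longrightarrow> A (fst (cf s n)) \<le> 1 \<and> A (snd (cf s n)) \<le> 1"
proof (induction n)
  case (Suc n)
  then have "A (fst (cf s n) * s) \<le> 1" by (simp add: mult_le_one)
  then show ?case using Suc by (auto intro: ultra_le)
qed simp

lemma lin_bound: assumes "A \<alpha> \<le> 1" "A \<beta> \<le> 1" shows "mbnd (lin \<alpha> \<beta> v) \<le> max (mbnd v) 1"
proof -
  obtain a b c d where v: "v = (a,b,c,d)" by (cases v)
  have m: "A (\<alpha> * x) \<le> A x" for x using assms(1) by (simp add: mult_left_le_one_le)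
  have "A (\<alpha>*a+\<beta>) \<le> max (mbnd v) 1" "A (\<alpha>*d+\<beta>) \<le> max (mbnd v) 1"
    using m[of a] m[of d] assms(2) by (auto intro!: ultra_le simp: v intro: order_trans)
  moreover have "A (\<alpha>*b) \<le> max (mbnd v) 1" "A (\<alpha>*c) \<le> max (mbnd v) 1"
    using m[of b] m[of c] by (auto simp: v intro: order_trans)
  ultimately show ?thesis by (simp add: v)
qed

lemma mpow_bound: "mdet v = 1 \<Longrightarrow> A (mtr v) \<le> 1 \<Longrightarrow> mbnd (mpow_nat v n) \<le> max (mbnd v) 1"
  using cf_bound[of "mtr v" n] by (simp add: mpow_lin lin_bound)

lemma mdist_mmul: "mdist A (mmul M X) (mmul M Y) \<le> mbnd M * mdist A X Y"
proof -
  obtain a b c d where M: "M = (a,b,c,d)" by (cases M)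
  obtain x1 x2 x3 x4 where X: "X = (x1,x2,x3,x4)" by (cases X)
  obtain y1 y2 y3 y4 where Y: "Y = (y1,y2,y3,y4)" by (cases Y)
  define D where "D = mdist A X Y"
  define B where "B = mbnd M"
  have D: "A (x1 - y1) \<le> D" "A (x2 - y2) \<le> D" "A (x3 - y3) \<le> D" "A (x4 - y4) \<le> D"
    by (auto simp: D_def X Y)
  have B: "A a \<le> B" "A b \<le> B" "A c \<le> B" "A d \<le> B" by (auto simp: B_def M)
  have pr: "A (u * (x - y)) \<le> B * D" if "A u \<le> B" "A (x - y) \<le> D" for u x y
    using that by (simp add: mult_mono' )
  have key: "A ((u*x + v*y) - (u*x' + v*y')) \<le> B * D"
    if "A u \<le> B" "A v \<le> B" "A (x - x') \<le> D" "A (y - y') \<le> D" for u v x y x' y'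
  proof -
    have "(u*x + v*y) - (u*x' + v*y') = u*(x - x') + v*(y - y')" by (simp add: algebra_simps)
    then show ?thesis using pr[OF that(1,3)] pr[OF that(2,4)] by (auto intro: ultra_le)
  qed
  show ?thesis unfolding D_def[symmetric] B_def[symmetric]
    using key[OF B(1) B(2) D(1) D(3)] key[OF B(1) B(2) D(2) D(4)]
      key[OF B(3) B(4) D(1) D(3)] key[OF B(3) B(4) D(2) D(4)]
    by (simp add: M X Y)
qed

lemma mdist_nonneg_aux: "0 \<le> mdist A x y"
  by (cases x; cases y) (simp add: le_max_iff_disj)

lemma mpow_mem: "mpow_nat h k \<in> cyclic_group h"
  unfolding cyclic_group_def by (rule range_eqI[of _ _ "int k"]) (simp add: mpow_def)

lemma torsion:
  assumes d: "mdet h = 1" and t: "A (mtr h) \<le> 1" and disc: "discrete_set A (cyclic_group h)"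
  shows "\<exists>m\<ge>1. mpow_nat h m = mone"
proof -
  define R where "R = max (mbnd h) 1"
  have R: "R > 0" by (simp add: R_def)
  obtain e where e: "e > 0" "\<And>h'. h' \<in> cyclic_group h \<Longrightarrow> mdist A mone h' < e \<Longrightarrow> h' = mone"
    using disc mpow_mem[of h 0] unfolding discrete_set_def by fastforce
  obtain F where F: "finite F" "\<And>y. A y \<le> R \<Longrightarrow> \<exists>f\<in>F. A (y - f) < e / R"
    using cover[of "e / R" R] e R by auto
  define ch where "ch = (\<lambda>y. SOME f. f \<in> F \<and> A (y - f) < e / R)"
  have ch: "ch y \<in> F" "A (y - ch y) < e / R" if "A y \<le> R" for y
    using someI_ex[OF F(2)[OF that, unfolded Bex_def]] unfolding ch_def by auto
  define g where "g = (\<lambda>k. case mpow_nat h k of (a,b,c,d) \<Rightarrow> (ch a, ch b, ch c, ch d))"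
  have bnd: "mbnd (mpow_nat h k) \<le> R" for k using mpow_bound[OF d t] by (simp add: R_def)
  have "g k \<in> F \<times> F \<times> F \<times> F" for k
    using bnd[of k] ch by (cases "mpow_nat h k") (auto simp: g_def)
  then obtain i j where ij: "i < j" "g i = g j"
    using pigeon[of "F \<times> F \<times> F \<times> F" g] F(1) by blast
  have close: "mdist A (mpow_nat h j) (mpow_nat h i) < e / R"
  proof -
    obtain a b c d where i: "mpow_nat h i = (a,b,c,d)" by (cases "mpow_nat h i")
    obtain a' b' c' d' where j: "mpow_nat h j = (a',b',c',d')" by (cases "mpow_nat h j")
    have bi: "A a \<le> R" "A b \<le> R" "A c \<le> R" "A d \<le> R" using bnd[of i] by (auto simp: i)
    have bj: "A a' \<le> R" "A b' \<le> R" "A c' \<le> R" "A d' \<le> R" using bnd[of j] by (auto simp: j)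
    have eqs: "ch a = ch a'" "ch b = ch b'" "ch c = ch c'" "ch d = ch d'" using ij(2) by (auto simp: g_def i j)
    have cl: "A (x' - x) < e / R" if "A x \<le> R" "A x' \<le> R" "ch x = ch x'" for x x'
    proof -
      have "x' - x = (x' - ch x') - (x - ch x)" using that(3) by simp
      then show ?thesis using ch(2)[OF that(1)] ch(2)[OF that(2)] by (metis ultra_diff_lt)
    qed
    show ?thesis using cl[OF bi(1) bj(1) eqs(1)] cl[OF bi(2) bj(2) eqs(2)] cl[OF bi(3) bj(3) eqs(3)]
        cl[OF bi(4) bj(4) eqs(4)] by (simp add: i j)
  qed
  define M where "M = mpow_nat (minv h) i"
  have M1: "mmul M (mpow_nat h i) = mone" using minv_pow_cancel[OF d] by (simp add: M_def)
  have M2: "mmul M (mpow_nat h j) = mpow_nat h (j - i)"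
  proof -
    have "mpow_nat h j = mmul (mpow_nat h i) (mpow_nat h (j - i))"
      using mpow_nat_add[of h i "j - i"] ij(1) by simp
    then show ?thesis by (simp add: mmul_assoc[symmetric] M1)
  qed
  have bM: "mbnd M \<le> R"
    using mpow_bound[of "minv h" i] d t by (simp add: M_def mdet_minv mtr_minv mbnd_minv R_def)
  have "mdist A (mpow_nat h (j - i)) mone \<le> mbnd M * mdist A (mpow_nat h j) (mpow_nat h i)"
    using mdist_mmul[of M "mpow_nat h j" "mpow_nat h i"] by (simp add: M1 M2)
  also have "\<dots> \<le> R * mdist A (mpow_nat h j) (mpow_nat h i)"
    using bM by (intro mult_right_mono) (auto simp: mdist_nonneg_aux)
  also have "\<dots> < R * (e / R)" using close R by (intro mult_strict_left_mono) auto
  also have "\<dots> = e" using R by simp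
  finally have "mpow_nat h (j - i) = mone" using e(2)[OF mpow_mem] mdist_sym by metis
  then show ?thesis using ij(1) by (intro exI[of _ "j - i"]) auto
qed

end


definition xt :: "'a::field \<Rightarrow> nat \<Rightarrow> 'a" where "xt s n = fst (cf s n) * s + 2 * snd (cf s n)"

lemma mtr_mpow: "mdet v = 1 \<Longrightarrow> mtr (mpow_nat v n) = xt (mtr v) n"
  by (simp add: mpow_lin mtr_lin xt_def)

lemma xt_rec: "xt s (Suc (Suc n)) = s * xt s (Suc n) - xt s n"
  by (simp add: xt_def algebra_simps)

lemma xt_0: "xt s 0 = 2" and xt_1: "xt s (Suc 0) = s" by (simp_all add: xt_def)

lemma pC_power: "[:a:] ^ n = [:a ^ n:]"
  by (induction n) (auto simp: one_pCons mult.commute)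

lemma pow_rec_gen: "(Z::'b::comm_ring_1)^Suc (Suc n) = c*Z^Suc n - Z^n + Z^n * (Z*Z - c*Z + 1)"
  by (simp add: algebra_simps)

lemma frob_poly_dvd:
  fixes s :: "'a::field"
  defines "X \<equiv> [:0,1:] :: 'a poly"
  defines "q \<equiv> X*X - [:s:]*X + 1"
  shows "q dvd [:xt s n:] - (X^n + ([:s:] - X)^n) \<and> q dvd [:xt s (Suc n):] - (X^Suc n + ([:s:] - X)^Suc n)"
proof (induction n)
  case 0
  have "[:xt s 0:] - (X^0 + ([:s:] - X)^0) = 0" by (simp add: xt_0 one_pCons numeral_2_eq_2)
  moreover have "[:xt s (Suc 0):] - (X^Suc 0 + ([:s:] - X)^Suc 0) = 0" by (simp add: xt_1)
  ultimately show ?case by simp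
next
  case (Suc n)
  let ?R = "\<lambda>n. X^n + ([:s:] - X)^n"
  have e1: "X^Suc (Suc n) = [:s:]*X^Suc n - X^n + X^n * q"
    unfolding q_def by (rule pow_rec_gen)
  have qY: "q = ([:s:] - X)*([:s:] - X) - [:s:]*([:s:] - X) + 1"
    unfolding q_def by (simp add: algebra_simps)
  have e2: "([:s:] - X)^Suc (Suc n) = [:s:]*([:s:] - X)^Suc n - ([:s:] - X)^n + ([:s:] - X)^n * q"
    unfolding qY by (rule pow_rec_gen)
  have "[:xt s (Suc (Suc n)):] - ?R (Suc (Suc n))
     = [:s:] * ([:xt s (Suc n):] - ?R (Suc n)) - ([:xt s n:] - ?R n) - (X^n + ([:s:] - X)^n) * q"
  proof -
    have c: "[:xt s (Suc (Suc n)):] = [:s:]*[:xt s (Suc n):] - [:xt s n:]"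
      by (simp add: xt_rec)
    have g: "c*a1 - a0 - ((c*x1 - x0 + x0*q) + (c*y1 - y0 + y0*q)) = c*(a1 - (x1+y1)) - (a0 - (x0+y0)) - (x0 + y0)*q"
      for c a1 a0 x1 x0 y1 y0 :: "'a poly" by (simp add: algebra_simps)
    show ?thesis unfolding c e1 e2 by (rule g)
  qed
  moreover have "q dvd [:s:] * ([:xt s (Suc n):] - ?R (Suc n)) - ([:xt s n:] - ?R n) - (X^n + ([:s:] - X)^n) * q"
  proof -
    have h0: "q dvd [:xt s n:] - ?R n" and h1: "q dvd [:xt s (Suc n):] - ?R (Suc n)" using Suc.IH by blast+
    show ?thesis by (rule dvd_diff[OF dvd_diff[OF dvd_mult[OF h1] h0] dvd_triv_right])
  qed
  ultimately have "q dvd [:xt s (Suc (Suc n)):] - ?R (Suc (Suc n))" by simp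
  then show ?case using Suc by simp
qed
lemma frob_trace:
  fixes s :: "'a::field"
  assumes p: "CHAR('a) = p" "prime p"
  shows "xt s p = s ^ p"
proof -
  define X where "X = ([:0,1:] :: 'a poly)"
  define q where "q = X*X - [:s:]*X + 1"
  have dv: "q dvd [:xt s p:] - (X^p + ([:s:] - X)^p)"
    using frob_poly_dvd[of s p] by (simp add: X_def q_def)
  have cp: "CHAR('a poly) = p" "prime CHAR('a poly)" using p by auto
  have "([:s:] + - X)^p = [:s:]^p + (-X)^p" using freshmans_dream[OF cp(2) cp(1)[symmetric]] .
  also have "(-X)^p = - (X^p)" using minus_power_prime_CHAR[of p X] cp by simp
  finally have "X^p + ([:s:] - X)^p = [:s ^ p:]" by (simp add: pC_power)
  with dv have dv2: "q dvd [:xt s p - s^p:]" by simp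
  have dq: "degree q = 2"
  proof -
    have "q = [:1, -s, 1:]" by (simp add: q_def X_def one_pCons algebra_simps)
    then show ?thesis by simp
  qed
  show ?thesis
  proof (rule ccontr)
    assume "xt s p \<noteq> s ^ p"
    then have "[:xt s p - s^p:] \<noteq> 0" by simp
    from dvd_imp_degree_le[OF dv2 this] dq show False by simp
  qed
qed



context nalf begin

lemma s_le1: "A (s - 2) < 1 \<Longrightarrow> A s \<le> 1"
proof -
  assume h: "A (s - 2) < 1"
  have "A ((s - 2) + 2) \<le> 1" using h two_le1 by (intro ultra_le) auto
  then show ?thesis by simp
qed

lemma two_mult_le: "A (2 * x) \<le> A x"
  by (simp only: mult) (rule mult_left_le_one_le; simp add: two_le1)

lemma cf_near2:
  assumes h: "A (s - 2) < 1"
  shows "A (fst (cf s n) - of_nat n) \<le> A (s - 2) \<and> A (snd (cf s n) - (1 - of_nat n)) \<le> A (s - 2)"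
proof (induction n)
  case 0
  then show ?case by simp
next
  case (Suc n)
  define a where "a = fst (cf s n)"
  define b where "b = snd (cf s n)"
  have IH: "A (a - of_nat n) \<le> A (s - 2)" "A (b - (1 - of_nat n)) \<le> A (s - 2)"
    using Suc by (auto simp: a_def b_def)
  have a1: "A a \<le> 1" using cf_bound[OF s_le1[OF h]] by (simp add: a_def)
  have e: "a * s + b - of_nat (Suc n) = 2 * (a - of_nat n) + (b - (1 - of_nat n)) + (s - 2) * a"
    by (simp add: algebra_simps)
  have t1: "A (2 * (a - of_nat n)) \<le> A (s - 2)"
    using IH(1) two_mult_le[of "a - of_nat n"] by linarith
  have t3: "A ((s - 2) * a) \<le> A (s - 2)" using a1 by (simp add: mult_left_le_one_le mult.commute)
  have "A (a * s + b - of_nat (Suc n)) \<le> A (s - 2)"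
    unfolding e using t1 IH(2) t3 by (intro ultra_le) auto
  moreover have "- a - (1 - of_nat (Suc n)) = - (a - of_nat n)" by simp
  ultimately show ?case using IH(1) diff_commute[of a "of_nat n"] by (simp add: a_def b_def)
qed

lemma trace_near2:
  assumes d: "mdet v = 1" and h: "A (mtr v - 2) < 1"
  shows "A (mtr (mpow_nat v n) - 2) \<le> A (mtr v - 2)"
proof -
  define s where "s = mtr v"
  define a where "a = fst (cf s n)"
  define b where "b = snd (cf s n)"
  have c: "A (a - of_nat n) \<le> A (s - 2)" "A (b - (1 - of_nat n)) \<le> A (s - 2)"
    using cf_near2[of s n] h by (auto simp: a_def b_def s_def)
  have s1: "A s \<le> 1" using s_le1 h by (simp add: s_def)
  have e: "xt s n - 2 = s * (a - of_nat n) + 2 * (b - (1 - of_nat n)) + (s - 2) * of_nat n"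
    by (simp add: xt_def a_def b_def algebra_simps)
  have t1: "A (s * (a - of_nat n)) \<le> A (s - 2)" using c(1) s1 by (simp add: order_trans[OF mult_left_le_one_le])
  have t2: "A (2 * (b - (1 - of_nat n))) \<le> A (s - 2)" using c(2) two_mult_le[of "b - (1 - of_nat n)"] by linarith
  have t3: "A ((s - 2) * of_nat n) \<le> A (s - 2)" using of_nat_le1[of n] by (simp add: mult_left_le_one_le mult.commute)
  have "A (xt s n - 2) \<le> A (s - 2)" unfolding e using t1 t2 t3 by (intro ultra_le) auto
  then show ?thesis using mtr_mpow[OF d] by (simp add: s_def)
qed

lemma prime_step:
  assumes dl: "0 < dl" "dl \<le> 1" "\<And>l. prime l \<Longrightarrow> of_nat l \<noteq> (0::'a) \<Longrightarrow> dl \<le> A (of_nat l)"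
  assumes w: "mdet w = 1" "mpow_nat w l = mone" "w \<noteq> mone" "prime l" "of_nat l \<noteq> (0::'a)"
      "A (mtr w - 2) < dl^2"
  shows False
proof (cases "w = (-1,0,0,-1)")
  case True
  show False
  proof (cases "(2::'a) = 0")
    case True
    then have "(-1::'a) = 1" by (metis add_eq_0_iff_both_eq_0 eq_neg_iff_add_eq_0 one_add_one)
    then show False using w(3) \<open>w = (-1,0,0,-1)\<close> by (simp add: mone_def)
  next
    case False
    then have "dl \<le> A 2" using dl(3)[of 2] by simp
    then have "dl^2 \<le> A 2 ^ 2" using dl(1) by (intro power_mono) auto
    moreover have "mtr w - 2 = - (2 ^ 2)" using \<open>w = (-1,0,0,-1)\<close> by simp
    then have "A (mtr w - 2) = A 2 ^ 2" by (simp only: minus power)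
    ultimately show False using w(6) by simp
  qed
next
  case False
  have "dl^2 \<le> dl" using dl by (simp add: power2_eq_square mult_left_le_one_le)
  have z1: "A (mtr w - 2) < 1" using w(6) \<open>dl^2 \<le> dl\<close> dl(2) by simp
  have "fst (cf (mtr w) l) = 0"
    using lin_mone_nonscalar[OF _ w(3) w(1) False] w(2) mpow_lin[OF w(1), of l] by simp
  then have "A (of_nat l) \<le> A (mtr w - 2)" using cf_near2[OF z1, of l] by simp
  moreover have "dl \<le> A (of_nat l)" using dl(3) w(4,5) by blast
  ultimately show False using w(6) \<open>dl^2 \<le> dl\<close> by simp
qed

lemma tors_ind:
  assumes dl: "0 < dl" "dl \<le> 1" "\<And>l. prime l \<Longrightarrow> of_nat l \<noteq> (0::'a) \<Longrightarrow> dl \<le> A (of_nat l)"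
  shows "r \<ge> 1 \<Longrightarrow> mdet y = 1 \<Longrightarrow> mpow_nat y r = mone \<Longrightarrow> A (mtr y - 2) < dl^2 \<Longrightarrow>
    (\<forall>l. prime l \<longrightarrow> l dvd r \<longrightarrow> of_nat l \<noteq> (0::'a)) \<Longrightarrow> y = mone"
proof (induction r rule: less_induct)
  case (less r)
  show ?case
  proof (cases "r = 1")
    case True
    then show ?thesis using less by simp
  next
    case False
    then obtain l where l: "prime l" "l dvd r" using prime_factor_nat by blast
    then obtain r' where r': "r = l * r'" by blast
    have r'1: "r' \<ge> 1" using less(2) r' by (cases r') auto
    have "r' < r" using r' r'1 prime_gt_1_nat[OF l(1)] by simp
    define w where "w = mpow_nat y r'"
    show ?thesis
    proof (cases "w = mone")
      case True
      show ?thesis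
        by (rule less.IH[OF \<open>r' < r\<close> r'1 less(3) True[unfolded w_def] less(5)])
           (use less(6) r' in auto)
    next
      case False
      have dl1: "dl^2 \<le> 1" using dl by (simp add: power_le_one)
      have "A (mtr w - 2) \<le> A (mtr y - 2)" unfolding w_def
        using trace_near2[OF less(3)] less(5) dl1 by simp
      then have "A (mtr w - 2) < dl^2" using less(5) by simp
      moreover have "mpow_nat w l = mone" using less(4) r' by (simp add: w_def mpow_nat_mult mult.commute)
      moreover have "mdet w = 1" using mdet_mpow less(3) by (simp add: w_def)
      ultimately show ?thesis using prime_step[OF dl, of w l] False l less(6) by blast
    qed
  qed
qed

lemma delta0: "\<exists>dl. 0 < dl \<and> dl \<le> 1 \<and> (\<forall>l. prime l \<longrightarrow> of_nat l \<noteq> (0::'a) \<longrightarrow> dl \<le> A (of_nat l))"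
proof (cases "\<exists>l0. prime l0 \<and> of_nat l0 \<noteq> (0::'a) \<and> A (of_nat l0) < 1")
  case True
  then obtain l0 where l0: "prime l0" "of_nat l0 \<noteq> (0::'a)" "A (of_nat l0) < 1" by blast
  have "A (of_nat l0) \<le> A (of_nat l)" if l: "prime l" "of_nat l \<noteq> (0::'a)" for l
  proof (cases "l = l0")
    case False
    have "coprime (int l) (int l0)" using primes_coprime[OF l(1) l0(1) False] by simp
    then obtain u v where uv: "u * int l + v * int l0 = 1" using bezout_int[of "int l" "int l0"]
      by (auto simp: coprime_iff_gcd_eq_1)
    have "(1::'a) = of_int u * of_nat l + of_int v * of_nat l0"
      using arg_cong[OF uv, of "of_int :: int \<Rightarrow> 'a"] by simp
    then have "1 \<le> max (A (of_int u * of_nat l)) (A (of_int v * of_nat l0))" using ultra by (metis one)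
    moreover have "A (of_int v * of_nat l0) < 1"
    proof -
      have "A (of_int v) * A (of_nat l0) \<le> A (of_nat l0)" using of_int_le1[of v] by (simp add: mult_left_le_one_le)
      then show ?thesis using l0(3) by simp
    qed
    ultimately have "1 \<le> A (of_int u * of_nat l)" by linarith
    also have "\<dots> \<le> A (of_nat l)" using of_int_le1[of u] by (simp add: mult_left_le_one_le)
    finally show ?thesis using l0(3) by simp
  qed simp
  moreover have "0 < A (of_nat l0)" using l0(2) nonneg[of "of_nat l0"] zero_iff[of "of_nat l0"] by linarith
  ultimately show ?thesis using l0 by (intro exI[of _ "A (of_nat l0)"]) auto
next
  case False
  then show ?thesis by (intro exI[of _ 1]) (auto simp: not_less)
qed

end


lemma factor_out:
  fixes p :: nat assumes "1 < p" shows "0 < m \<Longrightarrow> \<exists>j r. m = p^j * r \<and> \<not> p dvd r"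
proof (induction m rule: less_induct)
  case (less m)
  show ?case
  proof (cases "p dvd m")
    case True
    then obtain m' where m': "m = p * m'" by blast
    then have "0 < m'" "m' < m" using less(2) assms by auto
    then obtain j r where "m' = p^j * r" "\<not> p dvd r" using less.IH by blast
    then show ?thesis using m' by (intro exI[of _ "Suc j"] exI[of _ r]) auto
  next
    case False
    then show ?thesis by (intro exI[of _ 0] exI[of _ m]) auto
  qed
qed

lemma frobz:
  fixes u :: "'a::field mat2"
  assumes p: "CHAR('a) = p" "prime p" and d: "mdet u = 1"
  shows "mtr (mpow_nat u p) - 2 = (mtr u - 2) ^ p"
proof -
  have cp: "prime CHAR('a)" using p by simp
  have "(mtr u + - 2)^p = mtr u ^ p + (-2)^p" using freshmans_dream[OF cp p(1)[symmetric]] .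
  moreover have "(-(2::'a))^p = - (2^p)" using minus_power_prime_CHAR[OF p(1)[symmetric] p(2)] .
  moreover have "(2::'a)^p = 2"
    using freshmans_dream[OF cp p(1)[symmetric], of "1::'a" 1] by simp
  ultimately have "(mtr u - 2)^p = mtr u ^ p - 2" by simp
  then show ?thesis using mtr_mpow[OF d] frob_trace[OF p] by simp
qed

lemma frobz_iter:
  fixes v :: "'a::field mat2"
  assumes p: "CHAR('a) = p" "prime p" and d: "mdet v = 1"
  shows "mtr (mpow_nat v (p^j)) - 2 = (mtr v - 2) ^ (p^j)"
proof (induction j)
  case (Suc j)
  have "mpow_nat v (p ^ Suc j) = mpow_nat (mpow_nat v (p^j)) p"
    by (simp add: mpow_nat_mult mult.commute)
  then have "mtr (mpow_nat v (p ^ Suc j)) - 2 = (mtr (mpow_nat v (p^j)) - 2)^p"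
    using frobz[OF p mdet_mpow[OF d]] by simp
  also have "\<dots> = (mtr v - 2) ^ (p ^ Suc j)" using Suc by (simp add: power_mult[symmetric] mult.commute)
  finally show ?case .
qed (simp)

context nalf begin

lemma tors:
  assumes dl: "0 < dl" "dl \<le> 1" "\<And>l. prime l \<Longrightarrow> of_nat l \<noteq> (0::'a) \<Longrightarrow> dl \<le> A (of_nat l)"
  assumes v: "mdet v = 1" "mpow_nat v m = mone" "m \<ge> 1" "A (mtr v - 2) < dl^2"
  shows "mtr v = 2"
proof (cases "CHAR('a) = 0")
  case True
  then have "\<forall>l. prime l \<longrightarrow> l dvd m \<longrightarrow> of_nat l \<noteq> (0::'a)"
    using CHAR_eq0_iff prime_gt_0_nat by blast
  then have "v = mone" using tors_ind[OF dl v(3) v(1) v(2) v(4)] by blast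
  then show ?thesis by (simp add: mone_def)
next
  case False
  define p where "p = CHAR('a)"
  have p: "CHAR('a) = p" "prime p" using False prime_CHAR_semidom by (auto simp: p_def)
  obtain j r where jr: "m = p^j * r" "\<not> p dvd r"
    using factor_out[of p m] prime_gt_1_nat[OF p(2)] v(3) by auto
  have r1: "r \<ge> 1" using jr v(3) by (cases r) auto
  define y where "y = mpow_nat v (p^j)"
  have y1: "mdet y = 1" using mdet_mpow[OF v(1)] by (simp add: y_def)
  have y2: "mpow_nat y r = mone" using v(2) jr by (simp add: y_def mpow_nat_mult)
  have zy: "mtr y - 2 = (mtr v - 2) ^ (p^j)" using frobz_iter[OF p v(1)] by (simp add: y_def)
  have dl1: "dl^2 \<le> 1" using dl by (simp add: power_le_one)
  have "A (mtr v - 2) ^ (p^j) \<le> A (mtr v - 2) ^ 1"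
    using v(4) dl1 p(2) by (intro power_decreasing) (auto simp: prime_gt_0_nat Suc_le_eq)
  then have y3: "A (mtr y - 2) < dl^2" using v(4) zy by simp
  have y4: "\<forall>l. prime l \<longrightarrow> l dvd r \<longrightarrow> of_nat l \<noteq> (0::'a)"
  proof (intro allI impI notI)
    fix l assume l: "prime l" "l dvd r" "of_nat l = (0::'a)"
    then have "p dvd l" using of_nat_eq_0_iff_char_dvd p(1) by metis
    then have "p = l" using p(2) l(1) primes_dvd_imp_eq by blast
    then show False using l(2) jr(2) by simp
  qed
  have "y = mone" using tors_ind[OF dl r1 y1 y2 y3 y4] .
  then have "(mtr v - 2) ^ (p^j) = 0" using zy by (simp add: mone_def)
  then show ?thesis by simp
qed

end


primrec cfp :: "nat \<Rightarrow> 'a::field poly \<times> 'a poly" where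
  "cfp 0 = (0,1)"
| "cfp (Suc n) = (pCons 0 (fst (cfp n)) + snd (cfp n), - fst (cfp n))"

lemma poly_cfp: "poly (fst (cfp n)) s = fst (cf s n) \<and> poly (snd (cfp n)) s = snd (cf s n)"
  by (induction n) (auto simp: algebra_simps)

definition Tp :: "nat \<Rightarrow> 'a::field poly" where
  "Tp k = pCons 0 (fst (cfp k)) + smult 2 (snd (cfp k)) - [:2:]"

lemma poly_Tp: "poly (Tp k) s = xt s k - 2"
  using poly_cfp[of k s] by (simp add: Tp_def xt_def algebra_simps)

lemma cfp_L1: "(\<forall>i\<ge>n. coeff (fst (cfp n)) i = (0::'a::field)) \<and> (\<forall>i\<ge>n. 0 < i \<longrightarrow> coeff (snd (cfp n)) i = (0::'a))"
proof (induction n)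
  case 0
  have "coeff (1::'a poly) i = 0" if "0 < i" for i using that by (simp add: coeff_1)
  then show ?case by simp
next
  case (Suc n)
  have a: "coeff (fst (cfp (Suc n))) i = (0::'a)" if hi: "i \<ge> Suc n" for i
  proof -
    obtain i' where i: "i = Suc i'" using hi by (cases i) auto
    have ni: "n \<le> i'" using i hi by simp
    have h1: "coeff (fst (cfp n)) i' = (0::'a)" using Suc.IH ni by simp
    have ni2: "n \<le> Suc i'" "0 < Suc i'" using ni by auto
    have h2: "coeff (snd (cfp n)) (Suc i') = (0::'a)" using Suc.IH ni2 by simp
    have "coeff (fst (cfp (Suc n))) i = coeff (fst (cfp n)) i' + (coeff (snd (cfp n)) (Suc i')::'a)"
      by (simp add: i)
    then show ?thesis using h1 h2 by simp
  qed
  have b: "coeff (snd (cfp (Suc n))) i = (0::'a)" if hi: "i \<ge> Suc n" for i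
  proof -
    have "coeff (fst (cfp n)) i = (0::'a)" using hi by (intro conjunct1[OF Suc.IH, rule_format]) simp
    then show ?thesis by simp
  qed
  show ?case using a b by simp
qed

lemma cfp_L2: "coeff (fst (cfp (Suc n))) n = (1::'a::field)"
proof (induction n)
  case 0 then show ?case by simp
next
  case (Suc m)
  have "coeff (snd (cfp (Suc m))) (Suc m) = (0::'a)" using cfp_L1[of "Suc m"] by auto
  then show ?case using Suc by simp
qed

lemma Tp_nonzero: "k \<ge> 1 \<Longrightarrow> Tp k \<noteq> (0::'a::field poly)"
proof -
  assume "k \<ge> 1"
  then obtain m where k: "k = Suc m" by (cases k) auto
  have "coeff (Tp k :: 'a poly) k = 1"
  proof -
    have "coeff (fst (cfp m)) (Suc m) = (0::'a)" using cfp_L1[of m] by auto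
    then show ?thesis using cfp_L2[of m] cfp_L1[of k] by (simp add: Tp_def k)
  qed
  then show ?thesis by auto
qed

lemma finite_T: "finite {s::'a::field. \<exists>k. 1 \<le> k \<and> k \<le> N \<and> xt s k = 2}"
proof -
  have "{s::'a. \<exists>k. 1 \<le> k \<and> k \<le> N \<and> xt s k = 2} \<subseteq> (\<Union>k\<in>{1..N}. {s. poly (Tp k) s = 0})"
    by (auto simp: poly_Tp)
  moreover have "finite (\<Union>k\<in>{1..N}. {s::'a. poly (Tp k) s = 0})"
    by (intro finite_UN_I finite_atLeastAtMost poly_roots_finite Tp_nonzero) auto
  ultimately show ?thesis by (rule finite_subset)
qed

context nalf begin

definition close where "close e s i j \<longleftrightarrow> A (fst (cf s i) - fst (cf s j)) < e \<and> A (snd (cf s i) - snd (cf s j)) < e"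

lemma close_back: assumes "A s \<le> 1" "close e s (Suc a) (Suc b)" shows "close e s a b"
proof -
  define a1 where "a1 = fst (cf s a)"
  define b1 where "b1 = snd (cf s a)"
  define a2 where "a2 = fst (cf s b)"
  define b2 where "b2 = snd (cf s b)"
  have h: "A ((a1 * s + b1) - (a2 * s + b2)) < e" "A (a1 - a2) < e"
    using assms(2) by (auto simp: close_def a1_def a2_def b1_def b2_def diff_commute)
  have "b1 - b2 = ((a1 * s + b1) - (a2 * s + b2)) - s * (a1 - a2)" by (simp add: algebra_simps)
  moreover have "A (s * (a1 - a2)) < e" using h(2) assms(1) by (simp add: order_le_less_trans[OF mult_left_le_one_le])
  ultimately have "A (b1 - b2) < e" using h(1) by (metis ultra_diff_lt)
  then show ?thesis using h(2) by (simp add: close_def a1_def a2_def b1_def b2_def)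
qed

lemma close_shift: "A s \<le> 1 \<Longrightarrow> i \<le> j \<Longrightarrow> close e s i j \<Longrightarrow> close e s 0 (j - i)"
proof (induction i arbitrary: j)
  case (Suc i)
  then obtain j' where j: "j = Suc j'" by (cases j) auto
  then show ?case using Suc close_back[of s e i j'] by simp
qed simp

lemma trace_pigeon:
  assumes e: "e > 0"
  shows "\<exists>N. \<forall>s. A s \<le> 1 \<longrightarrow> (\<exists>k. 1 \<le> k \<and> k \<le> N \<and> A (xt s k - 2) < e)"
proof -
  obtain F where F: "finite F" "\<And>y. A y \<le> 1 \<Longrightarrow> \<exists>f\<in>F. A (y - f) < e"
    using cover[OF e, of 1] by auto
  define ch where "ch = (\<lambda>y. SOME f. f \<in> F \<and> A (y - f) < e)"
  have ch: "ch y \<in> F" "A (y - ch y) < e" if "A y \<le> 1" for y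
    using someI_ex[OF F(2)[OF that, unfolded Bex_def]] unfolding ch_def by auto
  have "A (xt s k - 2) < e" if s: "A s \<le> 1" and "1 \<le> k" "k \<le> card (F \<times> F)" "close e s 0 k" for s k
  proof -
    have c: "A (fst (cf s k)) < e" "A (snd (cf s k) - 1) < e" using that(4) by (auto simp: close_def diff_commute)
    have "xt s k - 2 = s * fst (cf s k) + 2 * (snd (cf s k) - 1)" by (simp add: xt_def algebra_simps)
    moreover have "A (s * fst (cf s k)) < e" using c(1) s by (simp add: order_le_less_trans[OF mult_left_le_one_le])
    moreover have "A (2 * (snd (cf s k) - 1)) < e" using c(2) two_mult_le[of "snd (cf s k) - 1"] by linarith
    ultimately show ?thesis by (metis ultra_lt)
  qed
  moreover have "\<exists>k. 1 \<le> k \<and> k \<le> card (F \<times> F) \<and> close e s 0 k" if s: "A s \<le> 1" for s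
  proof -
    define g where "g = (\<lambda>k. (ch (fst (cf s k)), ch (snd (cf s k))))"
    have "g k \<in> F \<times> F" for k using ch cf_bound[OF s, of k] by (auto simp: g_def)
    then obtain i j where ij: "i < j" "j \<le> card (F \<times> F)" "g i = g j"
      using pigeon[of "F \<times> F" g] F(1) by blast
    have cl: "A (x - x') < e" if "A x \<le> 1" "A x' \<le> 1" "ch x = ch x'" for x x'
    proof -
      have "x - x' = (x - ch x) - (x' - ch x')" using that(3) by simp
      then show ?thesis using ch(2)[OF that(1)] ch(2)[OF that(2)] by (metis ultra_diff_lt)
    qed
    have "close e s i j" using cl cf_bound[OF s, of i] cf_bound[OF s, of j] ij(3)
      by (auto simp: close_def g_def)
    then have "close e s 0 (j - i)" using close_shift[OF s] ij(1) by simp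
    then show ?thesis using ij by (intro exI[of _ "j - i"]) auto
  qed
  ultimately show ?thesis by blast
qed

end


lemma trl:
  fixes h :: "'a::field mat2"
  assumes D: "p*s - q*r \<noteq> 0"
    and e1: "mapply h (p,q) = (\<mu>*(x1*p + y1*r), \<mu>*(x1*q + y1*s))"
    and e2: "mapply h (r,s) = (\<mu>*(x2*p + y2*r), \<mu>*(x2*q + y2*s))"
  shows "mtr h = \<mu>*(x1 + y2)"
proof -
  obtain a b c d where hh: "h = (a,b,c,d)" by (cases h)
  have f: "a*p + b*q = \<mu>*(x1*p + y1*r)" "c*p + d*q = \<mu>*(x1*q + y1*s)"
          "a*r + b*s = \<mu>*(x2*p + y2*r)" "c*r + d*s = \<mu>*(x2*q + y2*s)"
    using e1 e2 by (auto simp: hh)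
  have "(a+d)*(p*s - q*r) = s*(a*p + b*q) - r*(c*p + d*q) - q*(a*r + b*s) + p*(c*r + d*s)"
    by (simp add: algebra_simps)
  also have "\<dots> = s*(\<mu>*(x1*p + y1*r)) - r*(\<mu>*(x1*q + y1*s)) - q*(\<mu>*(x2*p + y2*r)) + p*(\<mu>*(x2*q + y2*s))"
    by (simp only: f)
  also have "\<dots> = \<mu>*(x1 + y2)*(p*s - q*r)" by (simp add: algebra_simps)
  finally show ?thesis using D by (simp add: hh)
qed

lemma mapply_minv: "mdet g = 1 \<Longrightarrow> mapply (minv g) (mapply g w) = (w::'a::field \<times> 'a)"
proof -
  assume dd: "mdet g = 1"
  obtain a b c d where gg: "g = (a,b,c,d)" by (cases g)
  obtain u v where ww: "w = (u,v)" by (cases w)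
  have e: "a*d = 1 + b*c" using dd by (simp add: gg algebra_simps)
  have "a * (d * u) = u + b * (c * u)" "a * (d * v) = v + b * (c * v)"
    using arg_cong[OF e, of "\<lambda>t. t * u"] arg_cong[OF e, of "\<lambda>t. t * v"] by (simp_all add: algebra_simps)
  then show ?thesis by (simp add: gg ww algebra_simps)
qed

lemma mapply_scale: "mapply g (c*x, c*y) = (c * fst (mapply g (x,y)), c * snd (mapply g (x,y)))"
  by (cases g) (auto simp: algebra_simps)

context nalf begin

lemma elliptic_tr:
  assumes d: "mdet g = 1" and el: "elliptic A g"
  shows "A (mtr g) \<le> 1"
proof -
  obtain L c where Lc: "is_lattice A L" "c \<noteq> 0" "mapply g ` L = (\<lambda>(x,y). (c*x, c*y)) ` L"
    using el unfolding elliptic_def by blast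
  obtain p q r s where pq: "p*s - q*r \<noteq> 0"
    "L = {(x * p + y * r, x * q + y * s) | x y. A x \<le> 1 \<and> A y \<le> 1}"
    using Lc(1) unfolding is_lattice_def by blast
  have inL: "(x * p + y * r, x * q + y * s) \<in> L" if "A x \<le> 1" "A y \<le> 1" for x y
    using that pq(2) by blast
  have P: "(p,q) \<in> L" using inL[of 1 0] by simp
  have Q: "(r,s) \<in> L" using inL[of 0 1] by simp
  have fwd: "\<exists>x y. A x \<le> 1 \<and> A y \<le> 1 \<and> mapply g w = (c*(x*p + y*r), c*(x*q + y*s))" if "w \<in> L" for w
  proof -
    have "mapply g w \<in> (\<lambda>(x,y). (c*x, c*y)) ` L" using that Lc(3) by blast
    then show ?thesis using pq(2) by auto
  qed
  have bwd: "\<exists>x y. A x \<le> 1 \<and> A y \<le> 1 \<and> mapply (minv g) w = (inverse c*(x*p + y*r), inverse c*(x*q + y*s))"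
    if "w \<in> L" for w
  proof -
    obtain w1 w2 where w: "w = (w1,w2)" by (cases w)
    have "(c*w1, c*w2) \<in> mapply g ` L" using that Lc(3) w by force
    then obtain x y where xy: "A x \<le> 1" "A y \<le> 1" "(c*w1, c*w2) = mapply g (x * p + y * r, x * q + y * s)"
      using pq(2) by auto
    then have "mapply (minv g) (c*w1, c*w2) = (x * p + y * r, x * q + y * s)"
      by (simp only: xy(3) mapply_minv[OF d])
    then have "(c * fst (mapply (minv g) w), c * snd (mapply (minv g) w)) = (x * p + y * r, x * q + y * s)"
      using mapply_scale[of "minv g" c w1 w2] w by simp
    then have "mapply (minv g) w = (inverse c*(x*p + y*r), inverse c*(x*q + y*s))"
      using Lc(2) by (cases "mapply (minv g) w") (auto simp: field_simps)
    then show ?thesis using xy by blast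
  qed
  obtain x1 y1 where 1: "A x1 \<le> 1" "A y1 \<le> 1" "mapply g (p,q) = (c*(x1*p + y1*r), c*(x1*q + y1*s))"
    using fwd[OF P] by blast
  obtain x2 y2 where 2: "A x2 \<le> 1" "A y2 \<le> 1" "mapply g (r,s) = (c*(x2*p + y2*r), c*(x2*q + y2*s))"
    using fwd[OF Q] by blast
  obtain x3 y3 where 3: "A x3 \<le> 1" "A y3 \<le> 1" "mapply (minv g) (p,q) = (inverse c*(x3*p + y3*r), inverse c*(x3*q + y3*s))"
    using bwd[OF P] by blast
  obtain x4 y4 where 4: "A x4 \<le> 1" "A y4 \<le> 1" "mapply (minv g) (r,s) = (inverse c*(x4*p + y4*r), inverse c*(x4*q + y4*s))"
    using bwd[OF Q] by blast
  have t1: "mtr g = c * (x1 + y2)" using trl[OF pq(1) 1(3) 2(3)] .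
  have t2: "mtr g = inverse c * (x3 + y4)" using trl[OF pq(1) 3(3) 4(3)] mtr_minv[of g] by simp
  have "mtr g * mtr g = (c * inverse c) * ((x1 + y2) * (x3 + y4))"
    by (subst t1, subst t2) (simp add: algebra_simps)
  also have "\<dots> = (x1 + y2) * (x3 + y4)" using Lc(2) by simp
  finally have "mtr g * mtr g = (x1 + y2) * (x3 + y4)" .
  then have "A (mtr g) * A (mtr g) = A (x1 + y2) * A (x3 + y4)" by (simp only: mult[symmetric])
  also have "\<dots> \<le> 1" using 1 2 3 4 by (intro mult_le_one ultra_le) auto
  finally have sq: "A (mtr g) * A (mtr g) \<le> 1" .
  show ?thesis
  proof (rule ccontr)
    assume "\<not> A (mtr g) \<le> 1"
    then have "1 * 1 < A (mtr g) * A (mtr g)" by (intro mult_strict_mono) auto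
    then show False using sq by simp
  qed
qed

end


lemma mpow_mone: "mpow_nat (mone::'a::field mat2) k = mone"
  by (induction k) auto

context nalf begin

lemma pos_iff: "0 < A x \<longleftrightarrow> x \<noteq> 0"
  using nonneg[of x] zero_iff[of x] by linarith

lemma mtr_dist: "A (mtr x - mtr y) \<le> mdist A x y"
proof -
  obtain a b c d where x: "x = (a,b,c,d)" by (cases x)
  obtain a' b' c' d' where y: "y = (a',b',c',d')" by (cases y)
  have "mtr x - mtr y = (a - a') + (d - d')" by (simp add: x y)
  then have "A (mtr x - mtr y) \<le> max (A (a - a')) (A (d - d'))" using ultra by simp
  then show ?thesis by (auto simp: x y)
qed

lemma main:
  assumes sl: "\<And>n. gs n \<in> SL2"
    and disc: "\<And>n. discrete_set A (cyclic_group (gs n))"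
    and g: "g \<in> SL2" and el: "elliptic A g" and conv: "mat_converges A gs g"
  shows "\<exists>N. \<forall>n\<ge>N. mtr (gs n) = mtr (gs N)"
proof -
  have dg: "mdet g = 1" using g by (simp add: SL2_def)
  have dn: "mdet (gs n) = 1" for n using sl by (simp add: SL2_def)
  define t where "t = mtr g"
  have t1: "A t \<le> 1" using elliptic_tr[OF dg el] by (simp add: t_def)
  obtain dl where dl: "0 < dl" "dl \<le> 1" "\<And>l. prime l \<Longrightarrow> of_nat l \<noteq> (0::'a) \<Longrightarrow> dl \<le> A (of_nat l)"
    using delta0 by blast
  obtain M where M: "\<And>s. A s \<le> 1 \<Longrightarrow> \<exists>k. 1 \<le> k \<and> k \<le> M \<and> A (xt s k - 2) < dl^2"
    using trace_pigeon[of "dl^2"] dl(1) by auto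
  define T where "T = {s::'a. \<exists>k. 1 \<le> k \<and> k \<le> M \<and> xt s k = 2}"
  have fT: "finite T" unfolding T_def by (rule finite_T)
  have close_tr: "\<exists>N. \<forall>n\<ge>N. A (mtr (gs n) - t) < e" if ep: "e > 0" for e
  proof -
    obtain N where "\<forall>n\<ge>N. mdist A (gs n) g < e" using conv ep unfolding mat_converges_def by blast
    then show ?thesis using mtr_dist[of "gs _" g] by (auto simp: t_def intro: order_le_less_trans)
  qed
  obtain N0 where N0: "\<And>n. n \<ge> N0 \<Longrightarrow> A (mtr (gs n) - t) < 1" using close_tr[of 1] by auto
  have inT: "mtr (gs n) \<in> T" if n: "n \<ge> N0" for n
  proof -
    define h where "h = gs n"
    have hd: "mdet h = 1" using dn by (simp add: h_def)
    have "A ((mtr h - t) + t) \<le> 1" using N0[OF n] t1 by (intro ultra_le) (auto simp: h_def)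
    then have ht: "A (mtr h) \<le> 1" by simp
    obtain m where m: "m \<ge> 1" "mpow_nat h m = mone" using torsion[OF hd ht disc[of n, folded h_def]] by blast
    obtain k where k: "1 \<le> k" "k \<le> M" "A (xt (mtr h) k - 2) < dl^2" using M[OF ht] by blast
    define u where "u = mpow_nat h k"
    have ud: "mdet u = 1" using mdet_mpow[OF hd] by (simp add: u_def)
    have um: "mpow_nat u m = mone" using m(2)
      by (simp add: u_def mpow_nat_mult mult.commute[of k m] mpow_nat_mult[symmetric] mpow_mone)
    have "A (mtr u - 2) < dl^2" using k(3) mtr_mpow[OF hd] by (simp add: u_def)
    then have "mtr u = 2" using tors[OF dl ud um m(1)] by blast
    then have "xt (mtr h) k = 2" using mtr_mpow[OF hd] by (simp add: u_def)
    then show ?thesis using k unfolding T_def h_def by blast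
  qed
  define D where "D = {A (a - b) | a b. a \<in> T \<and> b \<in> T \<and> a \<noteq> b}"
  have "D \<subseteq> (\<lambda>(a,b). A (a - b)) ` (T \<times> T)" unfolding D_def by auto
  moreover have "finite ((\<lambda>(a,b). A (a - b)) ` (T \<times> T))" using fT by simp
  ultimately have fD: "finite D" by (rule finite_subset)
  define d where "d = Min (insert 1 D)"
  have dpos: "d > 0" using fD unfolding d_def D_def by (subst Min_gr_iff) (auto simp: pos_iff)
  have dle: "d \<le> A (a - b)" if "a \<in> T" "b \<in> T" "a \<noteq> b" for a b
    unfolding d_def using fD that by (intro Min_le) (auto simp: D_def)
  obtain N1 where N1: "\<And>n. n \<ge> N1 \<Longrightarrow> A (mtr (gs n) - t) < d" using close_tr[OF dpos] by auto
  define N where "N = max N0 N1"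
  have "mtr (gs n) = mtr (gs N)" if "n \<ge> N" for n
  proof (rule ccontr)
    assume ne: "mtr (gs n) \<noteq> mtr (gs N)"
    have "A (mtr (gs n) - mtr (gs N)) \<le> max (A (mtr (gs n) - t)) (A (t - mtr (gs N)))"
      by (rule ultra_trans)
    also have "\<dots> < d" using N1[of n] N1[of N] that diff_commute[of t "mtr (gs N)"] by (auto simp: N_def)
    finally show False using dle[OF inT inT ne] that by (auto simp: N_def)
  qed
  then show ?thesis by blast
qed

end

theorem corollary4p2:
  fixes absv :: "'a::field \<Rightarrow> real" and gs :: "nat \<Rightarrow> 'a mat2" and g :: "'a mat2"
  assumes "nonarch_local_field absv"
    and "\<And>n. gs n \<in> SL2"
    and "\<And>n. discrete_set absv (cyclic_group (gs n))"
    and "g \<in> SL2"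
    and "elliptic absv g"
    and "mat_converges absv gs g"
  shows "\<exists>N. \<forall>n\<ge>N. mtr (gs n) = mtr (gs N)"
proof -
  interpret nalf absv by standard (rule assms(1))
  show ?thesis using main assms(2-6) by blast
qed

end
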